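(* Let $R\geq 1$ be a real number and let $C,t\in \mathbb N$ be fixed. Consider pairs of sequences $\{\lambda_i\},\{\nu_i\}$ of nonnegative integers such that $\lambda_i\leq t$ for all $i$ and $\sum_{i\geq 1}(R\lambda_i+\nu_i) \leq C$. Under these conditions the maximal value of the expression $$A(\{\lambda\},\{\nu\})=\sum_{i\geq 1}\nu_i(\lambda_i-\nu_i)$$ can be attained by a pair of sequences $\{\lambda_i\},\{\nu_i\}$, $i=1,2,\dots,r$, such that: (i) $\lambda_1\geq \lambda_2 \geq \dots \geq \lambda_r$, $\nu_1\geq \nu_2 \geq \dots \geq \nu_r\geq 1$, and $\lambda_i \geq \nu_i$ for all $i$; (ii) $\lambda_1=\lambda_2 = \dots = \lambda_{r-1}=t$; and (iii) for some $0\leq b\leq r-1$ we have $\nu_1= \nu_2 = \dots = \nu_b=\nu_{b+1}+1=\dots=\nu_{r-1}+1$. If moreover $\lambda_r=t$, then also $\nu_r \in \{\nu_1, \nu_1-1\}$.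
   Context: The sequences $\{\lambda_i\},\{\nu_i\}$ are sequences of nonnegative integers indexed by $i\ge 1$ (with only finitely many nonzero terms, since $\sum_i(R\lambda_i+\nu_i)\le C$). *)

theory Defs
  imports Complex_Main
begin

text \<open>Sequences indexed by i \<ge> 1 are modelled as functions nat \<Rightarrow> nat; the value at index 0 is ignored.\<close>

definition supp2 :: "(nat \<Rightarrow> nat) \<Rightarrow> (nat \<Rightarrow> nat) \<Rightarrow> nat set" where
  "supp2 l n = {i. 1 \<le> i \<and> (l i \<noteq> 0 \<or> n i \<noteq> 0)}"

definition admissible :: "real \<Rightarrow> nat \<Rightarrow> nat \<Rightarrow> (nat \<Rightarrow> nat) \<Rightarrow> (nat \<Rightarrow> nat) \<Rightarrow> bool" where
  "admissible R C t l n \<longleftrightarrow>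
     (\<forall>i\<ge>1. l i \<le> t) \<and> finite (supp2 l n) \<and>
     (\<Sum>i\<in>supp2 l n. R * real (l i) + real (n i)) \<le> real C"

definition Aval :: "(nat \<Rightarrow> nat) \<Rightarrow> (nat \<Rightarrow> nat) \<Rightarrow> int" where
  "Aval l n = (\<Sum>i\<in>supp2 l n. int (n i) * (int (l i) - int (n i)))"

end

theory Submission imports Defs "HOL-Library.Multiset" "HOL-Library.Product_Lexorder"
begin

definition gv :: "nat \<times> nat \<Rightarrow> int" where
  "gv x = int (snd x) * (int (fst x) - int (snd x))"

definition cv :: "real \<Rightarrow> nat \<times> nat \<Rightarrow> real" where
  "cv R x = R * real (fst x) + real (snd x)"

definition Am :: "(nat \<times> nat) multiset \<Rightarrow> int" where
  "Am M = (\<Sum>x\<in>#M. gv x)"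

definition Cm :: "real \<Rightarrow> (nat \<times> nat) multiset \<Rightarrow> real" where
  "Cm R M = (\<Sum>x\<in>#M. cv R x)"

definition good :: "nat \<Rightarrow> nat \<times> nat \<Rightarrow> bool" where
  "good t x \<longleftrightarrow> 1 \<le> snd x \<and> snd x \<le> fst x \<and> fst x \<le> t"

definition npart :: "nat \<Rightarrow> (nat \<times> nat) multiset \<Rightarrow> nat" where
  "npart t M = size (filter_mset (\<lambda>x. fst x < t) M)"

lemma Am_add[simp]: "Am (add_mset x M) = gv x + Am M" by (simp add: Am_def)
lemma Cm_add[simp]: "Cm R (add_mset x M) = cv R x + Cm R M" by (simp add: Cm_def)
lemma Am_plus: "Am (M + N) = Am M + Am N" by (simp add: Am_def)
lemma Cm_plus: "Cm R (M + N) = Cm R M + Cm R N" by (simp add: Cm_def)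

lemma clean:
  assumes "R \<ge> 0" "\<forall>x\<in>#M. fst x \<le> t"
  shows "\<exists>M'. (\<forall>x\<in>#M'. good t x) \<and> Am M \<le> Am M' \<and> Cm R M' \<le> Cm R M"
proof -
  define P where "P = (\<lambda>x::nat\<times>nat. 1 \<le> snd x \<and> snd x \<le> fst x)"
  define M1 where "M1 = filter_mset P M"
  define M2 where "M2 = filter_mset (\<lambda>x. \<not> P x) M"
  have sp: "M = M1 + M2" unfolding M1_def M2_def by (rule multiset_partition)
  have "Am M2 \<le> (\<Sum>x\<in>#M2. 0)"
    unfolding Am_def
  proof (rule sum_mset_mono)
    fix x assume "x \<in># M2"
    then have "\<not> P x" by (simp add: M2_def)
    then show "gv x \<le> 0" unfolding gv_def P_def
      by (cases "snd x = 0") (auto simp: mult_nonneg_nonpos)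
  qed
  hence a: "Am M2 \<le> 0" by simp
  have "(\<Sum>x\<in>#M2. 0) \<le> Cm R M2"
    unfolding Cm_def by (rule sum_mset_mono) (simp add: cv_def assms(1))
  hence c: "0 \<le> Cm R M2" by simp
  have e1: "Am M = Am M1 + Am M2" using sp Am_plus by simp
  have e2: "Cm R M = Cm R M1 + Cm R M2" using sp Cm_plus by simp
  have g: "\<forall>x\<in>#M1. good t x" using assms(2) by (auto simp: good_def M1_def P_def)
  show ?thesis
    by (rule exI[of _ M1]) (use g a c e1 e2 in auto)
qed

lemma npart_add: "npart t (add_mset x M) = (if fst x < t then Suc (npart t M) else npart t M)"
  by (simp add: npart_def)

lemma merge_pair:
  assumes R: "R \<ge> 0" and gx: "good t x" and gy: "good t y" and px: "fst x < t" and py: "fst y < t"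
    and le: "snd y \<le> snd x" and gr: "\<forall>z\<in>#rest. good t z"
  shows "\<exists>M'. (\<forall>z\<in>#M'. good t z) \<and> npart t M' < npart t (add_mset x (add_mset y rest))
     \<and> Am (add_mset x (add_mset y rest)) \<le> Am M' \<and> Cm R M' \<le> Cm R (add_mset x (add_mset y rest))"
proof -
  obtain a1 b1 where x: "x = (a1, b1)" by (cases x)
  obtain a2 b2 where y: "y = (a2, b2)" by (cases y)
  define k where "k = min (t - a1) a2"
  have k1: "k \<le> a2" "a1 + k \<le> t" using px x by (auto simp: k_def)
  have k2: "a1 + k = t \<or> k = a2" using px x by (auto simp: k_def)
  define x' where "x' = (a1 + k, b1)"
  define y' where "y' = (a2 - k, b2)"
  have gx': "good t x'" using gx k1 by (auto simp: good_def x x'_def)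
  have "int b1 * (int (a1 + k) - int b1) + int b2 * (int (a2 - k) - int b2)
      = int b1 * (int a1 - int b1) + int b2 * (int a2 - int b2) + int k * (int b1 - int b2)"
    using k1 by (simp add: of_nat_diff algebra_simps)
  then have sumeq: "gv x' + gv y' = gv x + gv y + int k * (int b1 - int b2)"
    unfolding x'_def y'_def x y gv_def by simp
  have kge: "int k * (int b1 - int b2) \<ge> 0" using le x y by simp
  have "R * real (a1 + k) + real b1 + (R * real (a2 - k) + real b2) = R * real a1 + real b1 + (R * real a2 + real b2)"
    using k1 by (simp add: of_nat_diff algebra_simps)
  then have ceq: "cv R x' + cv R y' = cv R x + cv R y"
    unfolding x'_def y'_def x y cv_def by simp
  have np: "npart t (add_mset x (add_mset y rest)) = Suc (Suc (npart t rest))"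
    using px py by (simp add: npart_add)
  show ?thesis
  proof (cases "good t y'")
    case True
    have "k \<noteq> a2" using True by (auto simp: good_def y'_def)
    then have "fst x' = t" using k2 by (simp add: x'_def)
    then have n1: "npart t (add_mset x' (add_mset y' rest)) < npart t (add_mset x (add_mset y rest))"
      using np by (simp add: npart_add)
    have g1: "\<forall>z\<in>#add_mset x' (add_mset y' rest). good t z" using True gx' gr by simp
    have a1: "Am (add_mset x (add_mset y rest)) \<le> Am (add_mset x' (add_mset y' rest))"
      using sumeq kge by simp
    have c1: "Cm R (add_mset x' (add_mset y' rest)) \<le> Cm R (add_mset x (add_mset y rest))"
      using ceq by simp
    show ?thesis using n1 g1 a1 c1 by blast
  next
    case False
    have gy'0: "gv y' \<le> 0" using False gy unfolding good_def y'_def gv_def y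
      by (auto simp: mult_nonneg_nonpos)
    have cy'0: "cv R y' \<ge> 0" unfolding cv_def using R by simp
    have n1: "npart t (add_mset x' rest) < npart t (add_mset x (add_mset y rest))"
      using np by (simp add: npart_add)
    have g1: "\<forall>z\<in>#add_mset x' rest. good t z" using gx' gr by simp
    have a1: "Am (add_mset x (add_mset y rest)) \<le> Am (add_mset x' rest)"
      using sumeq kge gy'0 by simp
    have c1: "Cm R (add_mset x' rest) \<le> Cm R (add_mset x (add_mset y rest))"
      using ceq cy'0 by simp
    show ?thesis using n1 g1 a1 c1 by blast
  qed
qed

lemma two_parts:
  assumes "npart t M \<ge> 2"
  shows "\<exists>x y rest. M = add_mset x (add_mset y rest) \<and> fst x < t \<and> fst y < t"
proof -
  let ?F = "filter_mset (\<lambda>x. fst x < t) M"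
  have s2: "size ?F \<ge> 2" using assms by (simp add: npart_def)
  then obtain n where "size ?F = Suc (Suc n)" by (metis add_2_eq_Suc le_Suc_ex)
  then obtain x F1 where F1: "?F = add_mset x F1" and sF1: "size F1 = Suc n"
    by (metis size_eq_Suc_imp_eq_union size_add_mset nat.inject)
  then obtain y F2 where F2: "F1 = add_mset y F2"
    by (metis size_eq_Suc_imp_eq_union)
  have xin: "x \<in># ?F" using F1 by simp
  have yin: "y \<in># ?F" using F1 F2 by simp
  have fx: "fst x < t" using xin by (simp only: mem_Collect_eq set_mset_filter)
  have fy: "fst y < t" using yin by (simp only: mem_Collect_eq set_mset_filter)
  have M: "M = ?F + filter_mset (\<lambda>x. \<not> fst x < t) M" by (rule multiset_partition)
  show ?thesis
    apply (rule exI[of _ x], rule exI[of _ y], rule exI[of _ "F2 + filter_mset (\<lambda>x. \<not> fst x < t) M"])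
    using fx fy M F1 F2 by auto
qed

lemma dominate_good:
  assumes R: "R \<ge> 0" and g: "\<forall>x\<in>#M. good t x"
  shows "\<exists>M'. (\<forall>x\<in>#M'. good t x) \<and> npart t M' \<le> 1 \<and> Am M \<le> Am M' \<and> Cm R M' \<le> Cm R M"
  using g
proof (induction "npart t M" arbitrary: M rule: less_induct)
  case less
  show ?case
  proof (cases "npart t M \<le> 1")
    case True
    then show ?thesis using less.prems by blast
  next
    case False
    then obtain x y rest where M: "M = add_mset x (add_mset y rest)" and px: "fst x < t" and py: "fst y < t"
      using two_parts by (metis not_less_eq_eq one_add_one plus_1_eq_Suc)
    have gx: "good t x" and gy: "good t y" and gr: "\<forall>z\<in>#rest. good t z" using less.prems M by auto
    obtain M' where M': "\<forall>z\<in>#M'. good t z" "npart t M' < npart t M" "Am M \<le> Am M'" "Cm R M' \<le> Cm R M"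
    proof (cases "snd y \<le> snd x")
      case True
      then show ?thesis using merge_pair[OF R gx gy px py True gr] that M by blast
    next
      case False
      then have "snd x \<le> snd y" by simp
      from merge_pair[OF R gy gx py px this gr] show ?thesis using that M
        by (metis add_mset_commute)
    qed
    obtain M'' where "(\<forall>x\<in>#M''. good t x) \<and> npart t M'' \<le> 1 \<and> Am M' \<le> Am M'' \<and> Cm R M'' \<le> Cm R M'"
      using less.hyps[OF M'(2) M'(1)] by blast
    then show ?thesis using M' by (meson order_trans)
  qed
qed

lemma dominate:
  assumes R: "R \<ge> 0" and g: "\<forall>x\<in>#M. fst x \<le> t"
  shows "\<exists>M'. (\<forall>x\<in>#M'. good t x) \<and> npart t M' \<le> 1 \<and> Am M \<le> Am M' \<and> Cm R M' \<le> Cm R M"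
proof -
  obtain M1 where M1: "\<forall>x\<in>#M1. good t x" "Am M \<le> Am M1" "Cm R M1 \<le> Cm R M"
    using clean[OF R g] by blast
  obtain M2 where "(\<forall>x\<in>#M2. good t x) \<and> npart t M2 \<le> 1 \<and> Am M1 \<le> Am M2 \<and> Cm R M2 \<le> Cm R M1"
    using dominate_good[OF R M1(1)] by blast
  then show ?thesis using M1 by (meson order_trans)
qed

lemma Am_nonneg: "\<forall>x\<in>#M. good t x \<Longrightarrow> 0 \<le> Am M"
proof (induction M)
  case empty then show ?case by (simp add: Am_def)
next
  case (add x M)
  have "0 \<le> gv x" using add.prems by (auto simp: gv_def good_def)
  then show ?case using add by simp
qed

lemma Am_bound:
  assumes R: "R \<ge> 1"
  shows "\<forall>x\<in>#M. good t x \<Longrightarrow> real_of_int (Am M) \<le> real t * Cm R M"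
proof (induction M)
  case empty then show ?case by (simp add: Am_def Cm_def)
next
  case (add x M)
  obtain a b where x: "x = (a, b)" by (cases x)
  have ab: "b \<le> a" "b \<le> t" using add.prems x by (auto simp: good_def)
  have "real b * (real a - real b) \<le> real t * (real a - real b)"
    using ab by (intro mult_right_mono) auto
  also have "\<dots> \<le> real t * (R * real a + real b)"
  proof (rule mult_left_mono)
    have "1 * real a \<le> R * real a" using R by (intro mult_right_mono) auto
    then show "real a - real b \<le> R * real a + real b" by simp
  qed simp
  finally have "real_of_int (gv x) \<le> real t * cv R x"
    using ab by (simp add: gv_def cv_def x of_nat_diff)
  then show ?case using add by (simp add: algebra_simps)
qed

lemma fun_to_mset:
  assumes "admissible R C t l n"
  defines "M \<equiv> image_mset (\<lambda>i. (l i, n i)) (mset_set (supp2 l n))"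
  shows "(\<forall>x\<in>#M. fst x \<le> t) \<and> Cm R M \<le> real C \<and> Am M = Aval l n"
proof -
  have f: "finite (supp2 l n)" using assms by (simp add: admissible_def)
  have "\<forall>x\<in>#M. fst x \<le> t" using assms f by (auto simp: admissible_def supp2_def M_def)
  moreover have "Cm R M = (\<Sum>i\<in>supp2 l n. R * real (l i) + real (n i))"
    by (simp add: Cm_def M_def cv_def sum_unfold_sum_mset multiset.map_comp o_def)
  moreover have "Am M = Aval l n"
    by (simp add: Am_def M_def gv_def Aval_def sum_unfold_sum_mset multiset.map_comp o_def)
  ultimately show ?thesis using assms by (simp add: admissible_def)
qed

lemma two_idx:
  assumes "i < j" "j < length xs"
  shows "\<exists>rest. mset xs = add_mset (xs!i) (add_mset (xs!j) rest)"
proof -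
  have xs: "xs = take j xs @ xs!j # drop (Suc j) xs" using assms by (simp add: id_take_nth_drop)
  have "xs!i \<in> set (take j xs)" using assms by (metis in_set_conv_nth length_take min_less_iff_conj nth_take order.strict_trans)
  then obtain A where A: "mset (take j xs) = add_mset (xs!i) A" by (metis in_multiset_in_set multi_member_split)
  have "mset xs = mset (take j xs) + add_mset (xs!j) (mset (drop (Suc j) xs))"
    by (subst xs) simp
  then show ?thesis using A by (intro exI[of _ "A + mset (drop (Suc j) xs)"]) simp
qed

lemma list_to_fun:
  assumes g: "\<forall>x\<in>set xs. 1 \<le> snd x"
  defines "l \<equiv> \<lambda>i. if 1 \<le> i \<and> i \<le> length xs then fst (xs!(i-1)) else 0"
  and "n \<equiv> \<lambda>i. if 1 \<le> i \<and> i \<le> length xs then snd (xs!(i-1)) else 0"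
  shows "supp2 l n = {1..length xs}" and "Aval l n = Am (mset xs)"
    and "(\<Sum>i\<in>supp2 l n. R * real (l i) + real (n i)) = Cm R (mset xs)"
proof -
  show S: "supp2 l n = {1..length xs}"
  proof (rule set_eqI)
    fix i
    show "i \<in> supp2 l n \<longleftrightarrow> i \<in> {1..length xs}"
    proof
      assume "i \<in> supp2 l n" then show "i \<in> {1..length xs}"
        by (auto simp: supp2_def l_def n_def split: if_splits)
    next
      assume i: "i \<in> {1..length xs}"
      then have "xs!(i-1) \<in> set xs" by auto
      then have "n i \<noteq> 0" using g i by (auto simp: n_def)
      then show "i \<in> supp2 l n" using i by (simp add: supp2_def)
    qed
  qed
  have gen: "(\<Sum>i\<in>{1..length xs}. f (l i, n i)) = (\<Sum>x\<in>#mset xs. f x)" for f :: "nat \<times> nat \<Rightarrow> 'b::comm_monoid_add"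
  proof -
    have "(\<Sum>i\<in>{1..length xs}. f (l i, n i)) = (\<Sum>i\<in>{1..length xs}. f (xs!(i-1)))"
      by (rule sum.cong) (auto simp: l_def n_def)
    also have "\<dots> = (\<Sum>k<length xs. f (xs!k))"
      by (simp add: sum.atLeast1_atMost_eq)
    also have "\<dots> = sum_list (map f xs)"
      by (simp add: sum_list_sum_nth atLeast0LessThan)
    also have "\<dots> = (\<Sum>x\<in>#mset xs. f x)"
      by (metis mset_map sum_mset_sum_list)
    finally show ?thesis .
  qed
  show "Aval l n = Am (mset xs)"
    using gen[of gv] by (simp add: Aval_def S Am_def gv_def)
  show "(\<Sum>i\<in>supp2 l n. R * real (l i) + real (n i)) = Cm R (mset xs)"
    using gen[of "cv R"] by (simp add: S Cm_def cv_def)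
qed

theorem proposition7p1:
  fixes R :: real and C t :: nat
  assumes "R \<ge> 1"
  shows "\<exists>l n r.
    admissible R C t l n \<and>
    (\<forall>l' n'. admissible R C t l' n' \<longrightarrow> Aval l' n' \<le> Aval l n) \<and>
    (\<forall>i>r. l i = 0 \<and> n i = 0) \<and>
    (r \<ge> 1 \<longrightarrow>
      (\<forall>i j. 1 \<le> i \<and> i \<le> j \<and> j \<le> r \<longrightarrow> l j \<le> l i \<and> n j \<le> n i) \<and>
      n r \<ge> 1 \<and>
      (\<forall>i. 1 \<le> i \<and> i \<le> r \<longrightarrow> n i \<le> l i) \<and>
      (\<forall>i. 1 \<le> i \<and> i \<le> r - 1 \<longrightarrow> l i = t) \<and>
      (\<exists>b c. b \<le> r - 1 \<and>
         (\<forall>i. 1 \<le> i \<and> i \<le> b \<longrightarrow> n i = c) \<and>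
         (\<forall>i. b + 1 \<le> i \<and> i \<le> r - 1 \<longrightarrow> n i + 1 = c)) \<and>
      (l r = t \<longrightarrow> n r = n 1 \<or> n r = n 1 - 1))"
proof -
  have R0: "R \<ge> 0" using assms by simp
  define V where "V = {Am M | M. (\<forall>x\<in>#M. good t x) \<and> npart t M \<le> 1 \<and> Cm R M \<le> real C}"
  have Vsub: "V \<subseteq> {0..int (t * C)}"
  proof
    fix v assume "v \<in> V"
    then obtain M where M: "v = Am M" "\<forall>x\<in>#M. good t x" "Cm R M \<le> real C" by (auto simp: V_def)
    have "real_of_int v \<le> real t * Cm R M" using Am_bound[OF assms] M by simp
    also have "\<dots> \<le> real t * real C" using M(3) by (intro mult_left_mono) auto
    finally have "real_of_int v \<le> real_of_int (int (t * C))" by simp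
    then have "v \<le> int (t * C)" by linarith
    then show "v \<in> {0..int (t * C)}" using Am_nonneg[OF M(2)] M(1) by simp
  qed
  have "0 \<in> V" unfolding V_def
    by (rule CollectI, rule exI[of _ "{#}"]) (simp add: Am_def Cm_def npart_def)
  then have "V \<noteq> {}" by auto
  have finV: "finite V" using Vsub finite_subset by blast
  have "Max V \<in> V" using finV \<open>V \<noteq> {}\<close> by (rule Max_in)
  then obtain Ms where Ms: "Am Ms = Max V" "\<forall>x\<in>#Ms. good t x" "npart t Ms \<le> 1" "Cm R Ms \<le> real C"
    by (auto simp: V_def)
  have glob: "Am M \<le> Am Ms" if gl1: "\<forall>x\<in>#M. fst x \<le> t" and gl2: "Cm R M \<le> real C" for M
  proof -
    obtain M' where M': "\<forall>x\<in>#M'. good t x" "npart t M' \<le> 1" "Am M \<le> Am M'" "Cm R M' \<le> Cm R M"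
      using dominate[OF R0 gl1] by blast
    have "Am M' \<in> V" using M' gl2 unfolding V_def by force
    then have "Am M' \<le> Max V" using finV by simp
    then show ?thesis using M' Ms(1) by simp
  qed
  have Bx: "snd x \<le> snd y + 1"
    if h: "Ms = add_mset x (add_mset y rest)" "fst x = t" "fst y = t" for x y rest
  proof (rule ccontr)
    assume "\<not> snd x \<le> snd y + 1"
    then have lt: "snd y + 2 \<le> snd x" by simp
    define M2 where "M2 = add_mset (t, snd x - 1) (add_mset (t, snd y + 1) rest)"
    have "\<forall>z\<in>#rest. good t z" using Ms(2) h(1) by simp
    then have f: "\<forall>z\<in>#M2. fst z \<le> t" by (auto simp: M2_def good_def)
    have "cv R (t, snd x - 1) + cv R (t, snd y + 1) = cv R x + cv R y"
      using lt h by (simp add: cv_def of_nat_diff)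
    then have c: "Cm R M2 = Cm R Ms" using h(1) by (simp add: M2_def)
    have "gv (t, snd x - 1) + gv (t, snd y + 1) = gv x + gv y + 2 * (int (snd x) - int (snd y)) - 2"
      using lt h by (simp add: gv_def of_nat_diff algebra_simps)
    then have "Am M2 > Am Ms" using h(1) lt by (simp add: M2_def)
    moreover have "Am M2 \<le> Am Ms" using glob[OF f] c Ms(4) by simp
    ultimately show False by simp
  qed
  have Sx: "snd x \<le> snd y"
    if h: "Ms = add_mset x (add_mset y rest)" "fst x < t" "fst y = t" for x y rest
  proof (rule ccontr)
    assume "\<not> snd x \<le> snd y"
    then have lt: "snd y < snd x" by simp
    define M2 where "M2 = add_mset (t, snd x) (add_mset (fst x, snd y) rest)"
    have "\<forall>z\<in>#rest. good t z" using Ms(2) h(1) by simp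
    then have f: "\<forall>z\<in>#M2. fst z \<le> t" using h by (auto simp: M2_def good_def)
    have "cv R (t, snd x) + cv R (fst x, snd y) = cv R x + cv R y"
      using h by (simp add: cv_def)
    then have c: "Cm R M2 = Cm R Ms" using h(1) by (simp add: M2_def)
    have "gv (t, snd x) + gv (fst x, snd y) = gv x + gv y + (int (snd x) - int (snd y)) * (int t - int (fst x))"
      using h by (simp add: gv_def algebra_simps)
    moreover have "(int (snd x) - int (snd y)) * (int t - int (fst x)) > 0"
      using lt h(2) by (intro mult_pos_pos) auto
    ultimately have "Am M2 > Am Ms" using h(1) by (simp add: M2_def)
    moreover have "Am M2 \<le> Am Ms" using glob[OF f] c Ms(4) by simp
    ultimately show False by simp
  qed
  have Px: "\<not> (fst x < t \<and> fst y < t)"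
    if h: "Ms = add_mset x (add_mset y rest)" for x y rest
    using Ms(3) h by (auto simp: npart_add)
  define xs where "xs = rev (sorted_list_of_multiset Ms)"
  define r where "r = length xs"
  have msxs: "mset xs = Ms" by (simp add: xs_def)
  have setxs: "set xs = set_mset Ms" by (simp add: xs_def)
  have srt: "sorted (rev xs)" by (simp add: xs_def)
  have gxs: "good t (xs!p)" if "p < r" for p using that Ms(2) setxs r_def by (metis nth_mem)
  have idx: "\<exists>rest. Ms = add_mset (xs!p) (add_mset (xs!q) rest)" if "p < q" "q < r" for p q
    using two_idx[OF that(1), of xs] that(2) msxs r_def by simp
  have idx': "\<exists>rest. Ms = add_mset (xs!q) (add_mset (xs!p) rest)" if "p < q" "q < r" for p q
    using idx[OF that] by (metis add_mset_commute)
  have lex: "xs!q \<le> xs!p" if "p \<le> q" "q < r" for p q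
    using sorted_rev_nth_mono[OF srt that(1)] that(2) r_def by simp
  have monoL: "fst (xs!q) \<le> fst (xs!p)" if "p \<le> q" "q < r" for p q
    using lex[OF that] by (cases "xs!q", cases "xs!p") auto
  have monoN: "snd (xs!q) \<le> snd (xs!p)" if mn1: "p \<le> q" and mn2: "q < r" for p q
  proof (cases "fst (xs!q) = fst (xs!p)")
    case True
    then show ?thesis using lex[OF mn1 mn2] by (cases "xs!q", cases "xs!p") auto
  next
    case False
    then have lt: "fst (xs!q) < fst (xs!p)" using monoL[OF mn1 mn2] by simp
    then have pq: "p < q" using mn1 by (cases "p = q") auto
    have ft: "fst (xs!p) \<le> t" using gxs[of p] mn1 mn2 by (simp add: good_def)
    obtain rest where rr: "Ms = add_mset (xs!q) (add_mset (xs!p) rest)" using idx'[OF pq mn2] by blast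
    have "fst (xs!p) = t" using Px[OF rr] lt ft by auto
    then show ?thesis using Sx[OF rr] lt by simp
  qed
  have full: "fst (xs!p) = t" if fl: "p + 1 < r" for p
  proof (rule ccontr)
    assume a: "fst (xs!p) \<noteq> t"
    have "fst (xs!p) \<le> t" using gxs[of p] fl by (simp add: good_def)
    then have "fst (xs!p) < t" using a by simp
    moreover have "fst (xs!(r-1)) \<le> fst (xs!p)" using monoL[of p "r-1"] fl by simp
    moreover have pr: "p < r - 1" "r - 1 < r" using fl by auto
    moreover obtain rest where "Ms = add_mset (xs!p) (add_mset (xs!(r-1)) rest)" using idx[OF pr] by blast
    ultimately show False using Px by fastforce
  qed
  define l where "l = (\<lambda>i. if 1 \<le> i \<and> i \<le> length xs then fst (xs!(i-1)) else 0)"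
  define n where "n = (\<lambda>i. if 1 \<le> i \<and> i \<le> length xs then snd (xs!(i-1)) else 0)"
  have g1: "\<forall>x\<in>set xs. 1 \<le> snd x" using Ms(2) setxs by (auto simp: good_def)
  have LF1: "supp2 l n = {1..length xs}" unfolding l_def n_def by (rule list_to_fun(1)[OF g1])
  have LF2: "Aval l n = Am Ms" unfolding l_def n_def using list_to_fun(2)[OF g1] msxs by simp
  have LF3: "(\<Sum>i\<in>supp2 l n. R * real (l i) + real (n i)) = Cm R Ms"
    unfolding l_def n_def using list_to_fun(3)[OF g1, of R] msxs by simp
  have adm: "admissible R C t l n"
    unfolding admissible_def
  proof (intro conjI allI impI)
    fix i :: nat assume "1 \<le> i"
    show "l i \<le> t" using gxs[of "i-1"] by (auto simp: l_def good_def r_def)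
  next
    show "finite (supp2 l n)" using LF1 by simp
  next
    show "(\<Sum>i\<in>supp2 l n. R * real (l i) + real (n i)) \<le> real C" using LF3 Ms(4) by simp
  qed
  have opt: "\<forall>l' n'. admissible R C t l' n' \<longrightarrow> Aval l' n' \<le> Aval l n"
  proof (intro allI impI)
    fix l' n' assume a: "admissible R C t l' n'"
    show "Aval l' n' \<le> Aval l n" using fun_to_mset[OF a] glob LF2 by metis
  qed
  have lI: "l i = fst (xs!(i-1))" "n i = snd (xs!(i-1))" if "1 \<le> i" "i \<le> r" for i
    using that by (auto simp: l_def n_def r_def)
  show ?thesis
  proof (rule exI[of _ l], rule exI[of _ n], rule exI[of _ r], intro conjI adm opt impI)
    show "\<forall>i>r. l i = 0 \<and> n i = 0" by (auto simp: l_def n_def r_def)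
  next
    assume r1: "1 \<le> r"
    show "\<forall>i j. 1 \<le> i \<and> i \<le> j \<and> j \<le> r \<longrightarrow> l j \<le> l i \<and> n j \<le> n i"
    proof (intro allI impI)
      fix i j assume h: "1 \<le> i \<and> i \<le> j \<and> j \<le> r"
      have ij: "i - 1 \<le> j - 1" "j - 1 < r" using h by auto
      show "l j \<le> l i \<and> n j \<le> n i"
        using monoL[OF ij] monoN[OF ij] lI[of i] lI[of j] h by simp
    qed
  next
    assume r1: "1 \<le> r"
    show "1 \<le> n r" using gxs[of "r-1"] lI[of r] r1 by (simp add: good_def)
  next
    assume r1: "1 \<le> r"
    show "\<forall>i. 1 \<le> i \<and> i \<le> r \<longrightarrow> n i \<le> l i"
      using gxs lI by (auto simp: good_def)
  next
    assume r1: "1 \<le> r"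
    show "\<forall>i. 1 \<le> i \<and> i \<le> r - 1 \<longrightarrow> l i = t"
    proof (intro allI impI)
      fix i assume h: "1 \<le> i \<and> i \<le> r - 1"
      then have "i - 1 + 1 < r" "i \<le> r" "1 \<le> i" by auto
      then show "l i = t" using full[of "i-1"] lI[of i] by simp
    qed
  next
    assume r1: "1 \<le> r"
    have nmono: "n j \<le> n i" if nm: "1 \<le> i" "i \<le> j" "j \<le> r" for i j
    proof -
      have ij: "i - 1 \<le> j - 1" "j - 1 < r" using nm by auto
      show ?thesis using monoN[OF ij] lI[of i] lI[of j] nm by simp
    qed
    have close: "n 1 \<le> n j + 1" if cl: "1 \<le> j" "j \<le> r" "l j = t" for j
    proof (cases "j = 1")
      case True then show ?thesis by simp
    next
      case False
      have jj: "0 < j - 1" "j - 1 < r" using cl False by auto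
      obtain rest where rr: "Ms = add_mset (xs!0) (add_mset (xs!(j-1)) rest)"
        using idx[OF jj] by blast
      have "0 + 1 < r" "1 \<le> r" using cl False by auto
      then have f0: "fst (xs!0) = t" using full[of 0] by simp
      have fj: "fst (xs!(j-1)) = t" using lI(1)[of j] cl by simp
      have "snd (xs!0) \<le> snd (xs!(j-1)) + 1" using Bx[OF rr f0 fj] .
      then show ?thesis using lI(2)[of 1] lI(2)[of j] cl \<open>1 \<le> r\<close> by simp
    qed
    show "\<exists>b c. b \<le> r - 1 \<and> (\<forall>i. 1 \<le> i \<and> i \<le> b \<longrightarrow> n i = c) \<and>
         (\<forall>i. b + 1 \<le> i \<and> i \<le> r - 1 \<longrightarrow> n i + 1 = c)"
    proof (cases "r = 1")
      case True then show ?thesis by (intro exI[of _ 0]) auto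
    next
      case False
      define B where "B = {i. 1 \<le> i \<and> i \<le> r - 1 \<and> n i = n 1}"
      have "1 \<in> B" using False r1 by (simp add: B_def)
      have fB: "finite B" by (simp add: B_def)
      define b where "b = Max B"
      have bB: "b \<in> B" using Max_in[OF fB] \<open>1 \<in> B\<close> b_def by auto
      have bmax: "i \<le> b" if "i \<in> B" for i using Max_ge[OF fB that] b_def by simp
      show ?thesis
      proof (rule exI[of _ b], rule exI[of _ "n 1"], intro conjI allI impI)
        show "b \<le> r - 1" using bB by (simp add: B_def)
      next
        fix i assume ib: "1 \<le> i \<and> i \<le> b"
        have br: "b \<le> r" using bB by (auto simp: B_def)
        show "n i = n 1" using nmono[of 1 i] nmono[of i b] bB ib br by (auto simp: B_def)
      next
        fix i assume i: "b + 1 \<le> i \<and> i \<le> r - 1"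
        then have "i \<notin> B" using bmax by fastforce
        then have ne: "n i \<noteq> n 1" using i bB by (auto simp: B_def)
        have "i \<le> r" "1 \<le> i" using i by auto
        then have "n i \<le> n 1" using nmono[of 1 i] by simp
        moreover have "n 1 \<le> n i + 1"
        proof (rule close)
          have "i - 1 + 1 < r" "1 \<le> i" "i \<le> r" using i bB by (auto simp: B_def)
          then show "l i = t" using full[of "i-1"] lI(1)[of i] by simp
        qed (use i bB in \<open>auto simp: B_def\<close>)
        ultimately show "n i + 1 = n 1" using ne by simp
      qed
    qed
  next
    assume r1: "1 \<le> r" and lr: "l r = t"
    have rr0: "0 \<le> r - 1" "r - 1 < r" using r1 by auto
    have a: "n r \<le> n 1" using monoN[OF rr0] lI(2)[of 1] lI(2)[of r] r1 by simp
    have "n 1 \<le> n r + 1"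
    proof (cases "r = 1")
      case True then show ?thesis by simp
    next
      case False
      have jj: "0 < r - 1" "r - 1 < r" using r1 False by auto
      obtain rest where rr: "Ms = add_mset (xs!0) (add_mset (xs!(r-1)) rest)"
        using idx[OF jj] by blast
      have "0 + 1 < r" "1 \<le> r" using r1 False by auto
      then have f0: "fst (xs!0) = t" using full[of 0] by simp
      have fj: "fst (xs!(r-1)) = t" using lI(1)[of r] lr r1 by simp
      have "snd (xs!0) \<le> snd (xs!(r-1)) + 1" using Bx[OF rr f0 fj] .
      then show ?thesis using lI(2)[of 1] lI(2)[of r] r1 by simp
    qed
    then show "n r = n 1 \<or> n r = n 1 - 1" using a by linarith
  qed
qed

end
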